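(* Let $u_1,\dots,u_n$ be Boolean variables and $C_1,\dots,C_m$ clauses, each consisting of exactly 3 literals over these variables. Let $G$ be the graph with vertex set $\{x_i,u_i,v_i,\bar u_i,y_i:1\le i\le n\}\cup\{c_j:1\le j\le m\}\cup\{s_1,s_2,s_3,s_4,t\}$ and the following edges: for each $i$, $x_iu_i$, $u_iv_i$, $v_i\bar u_i$, $\bar u_iy_i$; for each $j$, an edge from $c_j$ to $u_i$ (resp. $\bar u_i$) whenever the literal $u_i$ (resp. $\bar u_i$) appears in $C_j$; for each $j$ and each $s\in\{s_1,s_3,s_4\}$, the edge $sc_j$; the edges $s_1s_2,s_3s_2,s_4s_2$; the edges $ts_1,ts_3,ts_4$; and the edges $tu_i$, $t\bar u_i$ for all $i$. Then (a) $\tilde\gamma_c(G-e)\le 3n+2$ for every edge $e\in E(G)$, and (b) $\tilde\gamma_c(G)=3n+1$ if and only if $b_{OCD}(G)=1$. Consequently, $\{C_1,\dots,C_m\}$ is satisfiable if and only if $b_{OCD}(G)=1$.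
   Context: All graphs are finite and simple. A set $S\subseteq V$ is a dominating set of $G=(V,E)$ if every vertex not in $S$ is adjacent to a vertex of $S$. A set $\tilde D\subseteq V$ is an outer-connected dominating set of $G$ if $\tilde D$ is dominating and the induced subgraph $G[V\setminus\tilde D]$ is connected (the empty graph counts as connected). $\tilde\gamma_c(G)$ denotes the minimum size of an outer-connected dominating set of $G$. For a graph $G$ without isolated vertices, $b_{OCD}(G)$ is the minimum number of edges whose removal from $G$ yields a graph $G'$ with $\tilde\gamma_c(G')>\tilde\gamma_c(G)$. A collection of clauses is satisfiable if some truth assignment makes every clause contain a true literal. *)

theory Defs
  imports Main
begin

definition dominating_set :: "'a set \<Rightarrow> 'a set set \<Rightarrow> 'a set \<Rightarrow> bool" where
  "dominating_set V E S \<longleftrightarrow> S \<subseteq> V \<and> (\<forall>v \<in> V - S. \<exists>s \<in> S. {v, s} \<in> E)"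

text \<open>The induced subgraph on W is connected (the empty graph counts as connected).\<close>
definition induced_connected :: "'a set set \<Rightarrow> 'a set \<Rightarrow> bool" where
  "induced_connected E W \<longleftrightarrow>
     (\<forall>a \<in> W. \<forall>b \<in> W. (a, b) \<in> {(x, y). x \<in> W \<and> y \<in> W \<and> {x, y} \<in> E}\<^sup>*)"

definition outer_connected_dominating :: "'a set \<Rightarrow> 'a set set \<Rightarrow> 'a set \<Rightarrow> bool" where
  "outer_connected_dominating V E D \<longleftrightarrow> dominating_set V E D \<and> induced_connected E (V - D)"

text \<open>Outer-connected domination number (V itself is always such a set).\<close>
definition ocd_number :: "'a set \<Rightarrow> 'a set set \<Rightarrow> nat" where
  "ocd_number V E = Min (card ` {D. outer_connected_dominating V E D})"

definition bondage_ocd :: "'a set \<Rightarrow> 'a set set \<Rightarrow> nat" where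
  "bondage_ocd V E = (LEAST k. \<exists>F \<subseteq> E. card F = k \<and> ocd_number V (E - F) > ocd_number V E)"

text \<open>A literal (i, True) is u_i, (i, False) is the negated literal.\<close>
type_synonym literal = "nat \<times> bool"

datatype vert = X nat | U nat | W nat | Ubar nat | Y nat | Cv nat | S1 | S2 | S3 | S4 | T

fun lit_vertex :: "literal \<Rightarrow> vert" where
  "lit_vertex (i, True) = U i"
| "lit_vertex (i, False) = Ubar i"

definition red_V :: "nat \<Rightarrow> nat \<Rightarrow> vert set" where
  "red_V n m = (\<Union>i \<in> {1..n}. {X i, U i, W i, Ubar i, Y i}) \<union> Cv ` {1..m} \<union> {S1, S2, S3, S4, T}"

definition red_E :: "nat \<Rightarrow> nat \<Rightarrow> (nat \<Rightarrow> literal set) \<Rightarrow> vert set set" where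
  "red_E n m C =
     (\<Union>i \<in> {1..n}. {{X i, U i}, {U i, W i}, {W i, Ubar i}, {Ubar i, Y i}, {T, U i}, {T, Ubar i}})
   \<union> {{Cv j, lit_vertex l} | j l. j \<in> {1..m} \<and> l \<in> C j}
   \<union> (\<Union>j \<in> {1..m}. {{S1, Cv j}, {S3, Cv j}, {S4, Cv j}})
   \<union> {{S1, S2}, {S3, S2}, {S4, S2}, {T, S1}, {T, S3}, {T, S4}}"

definition satisfiable :: "nat \<Rightarrow> (nat \<Rightarrow> literal set) \<Rightarrow> bool" where
  "satisfiable m C \<longleftrightarrow> (\<exists>a :: nat \<Rightarrow> bool. \<forall>j \<in> {1..m}. \<exists>(i, b) \<in> C j. a i = b)"

end

theory Submission
  imports Defs
begin

lemma mem_red_V: "v \<in> red_V n m \<longleftrightarrow> (case v of X i \<Rightarrow> i \<in> {1..n} | U i \<Rightarrow> i \<in> {1..n} | W i \<Rightarrow> i\<in>{1..n}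
   | Ubar i \<Rightarrow> i\<in>{1..n} | Y i \<Rightarrow> i\<in>{1..n} | Cv j \<Rightarrow> j \<in> {1..m} | _ \<Rightarrow> True)"
  by (cases v) (auto simp: red_V_def)

lemma finite_red_V: "finite (red_V n m)" by (simp add: red_V_def)

lemma lit_vertex_eq: "lit_vertex l = (if snd l then U (fst l) else Ubar (fst l))"
  by (cases l; cases "snd l") auto

fun adj :: "nat \<Rightarrow> nat \<Rightarrow> (nat \<Rightarrow> literal set) \<Rightarrow> vert \<Rightarrow> vert \<Rightarrow> bool" where
  "adj n m C (X i) v = (i\<in>{1..n} \<and> v = U i)"
| "adj n m C (U i) v = (i \<in> {1..n} \<and> (v = W i \<or> v = T))"
| "adj n m C (W i) v = (i \<in> {1..n} \<and> v = Ubar i)"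
| "adj n m C (Ubar i) v = (i\<in>{1..n} \<and> (v = Y i \<or> v = T))"
| "adj n m C (Cv j) v = (j \<in> {1..m} \<and> (v \<in> lit_vertex ` C j \<or> v = S1 \<or> v = S3 \<or> v = S4))"
| "adj n m C S1 v = (v = S2 \<or> v = T)"
| "adj n m C S3 v = (v = S2 \<or> v = T)"
| "adj n m C S4 v = (v = S2 \<or> v = T)"
| "adj n m C (Y i) v = False"
| "adj n m C S2 v = False"
| "adj n m C T v = False"

lemma ex_pair_adj: "adj n m C a b \<or> adj n m C b a \<Longrightarrow> \<exists>a' b'. {a,b} = {a',b'} \<and> adj n m C a' b'"
proof (elim disjE)
  assume "adj n m C a b" then show ?thesis by blast
next
  assume "adj n m C b a" then show ?thesis by (intro exI[of _ b] exI[of _ a]) (simp add: insert_commute)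
qed

lemma E_block: "i \<in> {1..n} \<Longrightarrow> {X i, U i} \<in> red_E n m C \<and> {U i, W i} \<in> red_E n m C \<and> {W i, Ubar i} \<in> red_E n m C
   \<and> {Ubar i, Y i} \<in> red_E n m C \<and> {T, U i} \<in> red_E n m C \<and> {T, Ubar i} \<in> red_E n m C"
  unfolding red_E_def by (intro conjI; rule UnI1, rule UnI1, rule UnI1, rule UN_I[of i]; simp)

lemma E_clause: "j \<in> {1..m} \<Longrightarrow> {S1, Cv j} \<in> red_E n m C \<and> {S3, Cv j} \<in> red_E n m C \<and> {S4, Cv j} \<in> red_E n m C"
  unfolding red_E_def by (intro conjI; rule UnI1, rule UnI2, rule UN_I[of j]; simp)

lemma E_lit: "j \<in> {1..m} \<Longrightarrow> l \<in> C j \<Longrightarrow> {Cv j, lit_vertex l} \<in> red_E n m C"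
  unfolding red_E_def by (rule UnI1, rule UnI1, rule UnI2) blast

lemma E_S: "{S1, S2} \<in> red_E n m C \<and> {S3, S2} \<in> red_E n m C \<and> {S4, S2} \<in> red_E n m C
   \<and> {T, S1} \<in> red_E n m C \<and> {T, S3} \<in> red_E n m C \<and> {T, S4} \<in> red_E n m C"
  unfolding red_E_def by (intro conjI; rule UnI2; simp)

lemma adj_in_E: "adj n m C a b \<Longrightarrow> {a, b} \<in> red_E n m C"
proof (cases a)
  case (U i) then show "adj n m C a b \<Longrightarrow> ?thesis" using E_block[of i n m C] by (auto simp: insert_commute)
next
  case (Ubar i) then show "adj n m C a b \<Longrightarrow> ?thesis" using E_block[of i n m C] by (auto simp: insert_commute)
next
  case (Cv j) then show "adj n m C a b \<Longrightarrow> ?thesis" using E_clause[of j m n C] E_lit[of j m _ C n]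
    by (auto simp: insert_commute)
next
  case (X i) then show "adj n m C a b \<Longrightarrow> ?thesis" using E_block[of i n m C] by (auto simp: insert_commute)
next
  case (W i) then show "adj n m C a b \<Longrightarrow> ?thesis" using E_block[of i n m C] by (auto simp: insert_commute)
qed (use E_S[of n m C] in \<open>auto simp: insert_commute\<close>)

lemma red_E_mem: "e \<in> red_E n m C \<longleftrightarrow> (\<exists>a b. e = {a,b} \<and> adj n m C a b)"
proof
  assume "e \<in> red_E n m C"
  then show "\<exists>a b. e = {a,b} \<and> adj n m C a b"
    unfolding red_E_def
    apply -
    apply (elim UnE UN_E insertE emptyE CollectE exE conjE; hypsubst; rule ex_pair_adj; auto)
    done
next
  assume "\<exists>a b. e = {a,b} \<and> adj n m C a b"
  then show "e \<in> red_E n m C" using adj_in_E by blast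
qed

lemma red_E_pair: "{a,b} \<in> red_E n m C \<longleftrightarrow> adj n m C a b \<or> adj n m C b a"
proof
  assume "{a,b} \<in> red_E n m C"
  then obtain x y where xy: "{a,b} = {x,y}" "adj n m C x y" unfolding red_E_mem by blast
  from xy(1) have "(a = x \<and> b = y) \<or> (a = y \<and> b = x)" by (simp add: doubleton_eq_iff)
  then show "adj n m C a b \<or> adj n m C b a" using xy(2) by blast
next
  assume "adj n m C a b \<or> adj n m C b a"
  then show "{a,b} \<in> red_E n m C" using adj_in_E[of n m C a b] adj_in_E[of n m C b a]
    by (metis insert_commute)
qed

lemma ocd_mono: "E' \<subseteq> E \<Longrightarrow> outer_connected_dominating V E' D \<Longrightarrow> outer_connected_dominating V E D"
  unfolding outer_connected_dominating_def dominating_set_def induced_connected_def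
proof (intro conjI ballI; (elim conjE)?)
  fix a b assume "E' \<subseteq> E" and h: "\<forall>a\<in>V - D. \<forall>b\<in>V - D. (a, b) \<in> {(x, y). x \<in> V - D \<and> y \<in> V - D \<and> {x, y} \<in> E'}\<^sup>*"
    and "a \<in> V - D" "b \<in> V - D"
  then have "(a, b) \<in> {(x, y). x \<in> V - D \<and> y \<in> V - D \<and> {x, y} \<in> E'}\<^sup>*" by blast
  moreover have "{(x, y). x \<in> V - D \<and> y \<in> V - D \<and> {x, y} \<in> E'} \<subseteq> {(x, y). x \<in> V - D \<and> y \<in> V - D \<and> {x, y} \<in> E}"
    using \<open>E' \<subseteq> E\<close> by blast
  ultimately show "(a, b) \<in> {(x, y). x \<in> V - D \<and> y \<in> V - D \<and> {x, y} \<in> E}\<^sup>*"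
    using rtrancl_mono by blast
qed blast+

lemma ocd_V: "outer_connected_dominating V E V"
  by (simp add: outer_connected_dominating_def dominating_set_def induced_connected_def)

lemma ocd_sets_finite: "finite V \<Longrightarrow> finite (card ` {D. outer_connected_dominating V E D})"
  apply (rule finite_imageI)
  apply (rule finite_subset[of _ "Pow V"])
   apply (auto simp: outer_connected_dominating_def dominating_set_def)
  done

lemma ocd_number_le: "finite V \<Longrightarrow> outer_connected_dominating V E D \<Longrightarrow> ocd_number V E \<le> card D"
  unfolding ocd_number_def by (rule Min_le) (auto simp: ocd_sets_finite)

lemma ocd_number_ex: "finite V \<Longrightarrow> \<exists>D. outer_connected_dominating V E D \<and> card D = ocd_number V E"
proof -
  assume f: "finite V"
  have "ocd_number V E \<in> card ` {D. outer_connected_dominating V E D}"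
    unfolding ocd_number_def using ocd_V[of V E] by (intro Min_in) (auto simp: ocd_sets_finite f)
  then show ?thesis by auto
qed

lemma ocd_number_mono: "finite V \<Longrightarrow> E' \<subseteq> E \<Longrightarrow> ocd_number V E \<le> ocd_number V E'"
  by (metis ocd_number_ex ocd_number_le ocd_mono)

lemma ocd_number_empty: "finite V \<Longrightarrow> ocd_number V {} = card V"
proof -
  assume f: "finite V"
  obtain D where D: "outer_connected_dominating V {} D" "card D = ocd_number V {}"
    using ocd_number_ex[OF f] by blast
  then have "D = V" by (auto simp: outer_connected_dominating_def dominating_set_def)
  with D show ?thesis by simp
qed

lemma hub_conn:
  assumes "h \<in> R" "\<forall>a\<in>R. (a, h) \<in> {(x, y). x \<in> R \<and> y \<in> R \<and> {x, y} \<in> E}\<^sup>*"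
  shows "induced_connected E R"
proof -
  let ?r = "{(x, y). x \<in> R \<and> y \<in> R \<and> {x, y} \<in> E}"
  have sym: "?r\<inverse> = ?r" by (auto simp: insert_commute)
  show ?thesis unfolding induced_connected_def
  proof (intro ballI)
    fix a b assume a: "a \<in> R" and b: "b \<in> R"
    have "(b, h) \<in> ?r\<^sup>*" using assms b by blast
    then have "(h, b) \<in> (?r\<inverse>)\<^sup>*" by (rule rtrancl_converseI)
    then have "(h, b) \<in> ?r\<^sup>*" by (simp only: sym)
    moreover have "(a, h) \<in> ?r\<^sup>*" using assms a by blast
    ultimately show "(a, b) \<in> ?r\<^sup>*" by (rule rtrancl_trans[rotated])
  qed
qed

lemma bondage_one:
  assumes f: "finite V" and fE: "finite E" and big: "ocd_number V E < card V"
  shows "bondage_ocd V E = 1 \<longleftrightarrow> (\<exists>e\<in>E. ocd_number V (E - {e}) > ocd_number V E)"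
proof -
  let ?P = "\<lambda>k. \<exists>F \<subseteq> E. card F = k \<and> ocd_number V (E - F) > ocd_number V E"
  have PE: "?P (card E)" using big by (intro exI[of _ E]) (simp add: ocd_number_empty f)
  have P0: "\<not> ?P 0"
  proof
    assume "?P 0"
    then obtain F where "F \<subseteq> E" "card F = 0" "ocd_number V (E - F) > ocd_number V E" by blast
    moreover have "finite F" using \<open>F \<subseteq> E\<close> fE finite_subset by blast
    ultimately show False
      by (metis Diff_empty card_0_eq less_irrefl)
  qed
  have "?P 1 \<longleftrightarrow> (\<exists>e\<in>E. ocd_number V (E - {e}) > ocd_number V E)"
    by (auto simp: card_Suc_eq)
  moreover have "bondage_ocd V E = 1 \<longleftrightarrow> ?P 1"
  proof
    assume "bondage_ocd V E = 1"
    then show "?P 1" using LeastI_ex[of ?P] PE unfolding bondage_ocd_def by metis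
  next
    assume p1: "?P 1"
    have "(LEAST k. ?P k) \<le> 1" using p1 by (rule Least_le)
    moreover have "(LEAST k. ?P k) \<noteq> 0" using LeastI_ex[of ?P] PE P0 by metis
    ultimately show "bondage_ocd V E = 1" unfolding bondage_ocd_def by linarith
  qed
  ultimately show ?thesis by simp
qed

lemma lv_eqs[simp]:
  "U k = lit_vertex p \<longleftrightarrow> p = (k, True)" "Ubar k = lit_vertex p \<longleftrightarrow> p = (k, False)"
  "X k \<noteq> lit_vertex p" "Y k \<noteq> lit_vertex p" "W k \<noteq> lit_vertex p" "Cv k \<noteq> lit_vertex p"
  "S1 \<noteq> lit_vertex p" "S2 \<noteq> lit_vertex p" "S3 \<noteq> lit_vertex p" "S4 \<noteq> lit_vertex p" "T \<noteq> lit_vertex p"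
  by (cases p; cases "snd p"; auto)+

lemma lit_img: "v \<in> lit_vertex ` A \<longleftrightarrow> (case v of U i \<Rightarrow> (i, True) \<in> A | Ubar i \<Rightarrow> (i, False) \<in> A | _ \<Rightarrow> False)"
  by (cases v) (auto simp: image_iff)

lemma adj_refl[simp]: "\<not> adj n m C a a"
  by (cases a) (auto simp: lit_img)

lemma single_notin[simp]: "{a} \<notin> red_E n m C"
  by (auto simp: red_E_mem doubleton_eq_iff)

lemma nbX: "{X i, z} \<in> red_E n m C \<Longrightarrow> z = U i"
  by (cases z) (auto simp: red_E_pair lit_img)
lemma nbY: "{Y i, z} \<in> red_E n m C \<Longrightarrow> z = Ubar i"
  by (cases z) (auto simp: red_E_pair lit_img)
lemma nbW: "{W i, z} \<in> red_E n m C \<Longrightarrow> z = U i \<or> z = Ubar i"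
  by (cases z) (auto simp: red_E_pair lit_img)
lemma nbS1: "{S1, z} \<in> red_E n m C \<Longrightarrow> z = S2 \<or> z = T \<or> (\<exists>j. z = Cv j)"
  by (cases z) (auto simp: red_E_pair lit_img)
lemma nbS3: "{S3, z} \<in> red_E n m C \<Longrightarrow> z = S2 \<or> z = T \<or> (\<exists>j. z = Cv j)"
  by (cases z) (auto simp: red_E_pair lit_img)
lemma nbS2: "{S2, z} \<in> red_E n m C \<Longrightarrow> z = S1 \<or> z = S3 \<or> z = S4"
  by (cases z) (auto simp: red_E_pair lit_img)
lemma nbC: "{Cv j, z} \<in> red_E n m C \<Longrightarrow> z = S1 \<or> z = S3 \<or> z = S4 \<or> (\<exists>l \<in> C j. z = lit_vertex l)"
  by (cases z) (auto simp: red_E_pair lit_img lit_vertex_eq)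

lemma card_big: "card (U ` {1..n} \<union> W ` {1..n} \<union> Ubar ` {1..n} \<union> {S1, S2, S3, S4}) = 3 * n + 4"
  by (subst card_Un_disjoint; auto simp: card_Un_disjoint card_image inj_on_def)+

lemma XY_in:
  assumes D: "outer_connected_dominating (red_V n m) E' D" and sub: "E' \<subseteq> red_E n m C"
    and cD: "card D \<le> 3 * n + 1" and k: "k \<in> {1..n}"
  shows "X k \<in> D \<and> Y k \<in> D"
proof (rule ccontr)
  let ?V = "red_V n m"
  let ?r = "{(x, y). x \<in> ?V - D \<and> y \<in> ?V - D \<and> {x, y} \<in> E'}"
  have dom: "\<forall>v\<in>?V - D. \<exists>s\<in>D. {v, s} \<in> E'" and DV: "D \<subseteq> ?V"
    and con: "\<forall>a\<in>?V - D. \<forall>b\<in>?V - D. (a, b) \<in> ?r\<^sup>*"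
    using D by (auto simp: outer_connected_dominating_def dominating_set_def induced_connected_def)
  assume "\<not> (X k \<in> D \<and> Y k \<in> D)"
  then have "X k \<notin> D \<or> Y k \<notin> D" by blast
  then obtain z q where zq: "z \<in> ?V - D" "\<And>w. {z, w} \<in> red_E n m C \<Longrightarrow> w = q" "z \<in> {X k, Y k}"
  proof (elim disjE)
    assume "X k \<notin> D" then show ?thesis using that[of "X k" "U k"] k nbX by (auto simp: mem_red_V)
  next
    assume "Y k \<notin> D" then show ?thesis using that[of "Y k" "Ubar k"] k nbY by (auto simp: mem_red_V)
  qed
  then obtain s where s: "s \<in> D" "{z, s} \<in> E'" using dom by blast
  then have "q \<in> D" using zq sub by blast
  have "?V - D = {z}"
  proof (intro equalityI subsetI)
    fix b assume b: "b \<in> ?V - D"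
    have "(z, b) \<in> ?r\<^sup>*" using con b zq by blast
    then show "b \<in> {z}"
    proof (cases rule: converse_rtranclE)
      case (step c)
      then have "{z, c} \<in> red_E n m C" "c \<notin> D" using sub by auto
      then show ?thesis using zq \<open>q \<in> D\<close> by blast
    qed simp
  qed (use zq in auto)
  then have inD: "\<And>v. v \<in> ?V \<Longrightarrow> v \<noteq> z \<Longrightarrow> v \<in> D" by blast
  have "U ` {1..n} \<union> W ` {1..n} \<union> Ubar ` {1..n} \<union> {S1, S2, S3, S4} \<subseteq> D"
  proof
    fix v assume v: "v \<in> U ` {1..n} \<union> W ` {1..n} \<union> Ubar ` {1..n} \<union> {S1, S2, S3, S4}"
    then have "v \<in> ?V" by (auto simp: mem_red_V)
    moreover have "v \<noteq> z" using v zq(3) by auto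
    ultimately show "v \<in> D" by (rule inD)
  qed
  then have "card (U ` {1..n} \<union> W ` {1..n} \<union> Ubar ` {1..n} \<union> {S1, S2, S3, S4}) \<le> card D"
    using DV finite_red_V finite_subset by (intro card_mono) blast+
  with cD card_big[of n] show False by linarith
qed

lemma struct:
  assumes D: "outer_connected_dominating (red_V n m) E' D" and sub: "E' \<subseteq> red_E n m C"
    and cD: "card D \<le> 3 * n + 1"
  shows "card D = 3 * n + 1 \<and> T \<notin> D \<and> (\<forall>j. Cv j \<notin> D) \<and> S1 \<notin> D \<and> S3 \<notin> D \<and> S4 \<notin> D \<and> S2 \<in> D
     \<and> (\<forall>k. \<not> (U k \<in> D \<and> Ubar k \<in> D))"
proof -
  let ?V = "red_V n m"
  let ?I = "{1..n}"
  have dom: "\<forall>v\<in>?V - D. \<exists>s\<in>D. {v, s} \<in> red_E n m C" and DV: "D \<subseteq> ?V"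
    using D sub unfolding outer_connected_dominating_def dominating_set_def by blast+
  have fD: "finite D" using DV finite_red_V finite_subset by blast
  have XY: "\<forall>k\<in>?I. X k \<in> D \<and> Y k \<in> D" using XY_in[OF D sub cD] by blast
  have "\<forall>k\<in>?I. \<exists>v. v \<in> D \<and> v \<in> {U k, W k, Ubar k}"
  proof
    fix k assume k: "k \<in> ?I"
    show "\<exists>v. v \<in> D \<and> v \<in> {U k, W k, Ubar k}"
    proof (cases "W k \<in> D")
      case False
      then have "W k \<in> ?V - D" using k by (simp add: mem_red_V)
      then obtain s where "s \<in> D" "{W k, s} \<in> red_E n m C" using dom by blast
      then show ?thesis using nbW by blast
    qed auto
  qed
  then obtain f where f: "\<forall>k\<in>?I. f k \<in> D \<and> f k \<in> {U k, W k, Ubar k}" by metis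
  obtain s0 where s0: "s0 \<in> D" "s0 \<in> {S1, S2, S3, S4}"
  proof (cases "S2 \<in> D")
    case False
    then have "S2 \<in> ?V - D" by (simp add: mem_red_V)
    then obtain s where "s \<in> D" "{S2, s} \<in> red_E n m C" using dom by blast
    then show ?thesis using nbS2 that by blast
  qed (use that in auto)
  let ?P = "X ` ?I \<union> Y ` ?I \<union> f ` ?I \<union> {s0}"
  have injf: "inj_on f ?I"
  proof (rule inj_onI)
    fix a b assume "a \<in> ?I" "b \<in> ?I" "f a = f b"
    then have h1: "f a \<in> {U a, W a, Ubar a}" and h2: "f a \<in> {U b, W b, Ubar b}" using f by metis+
    from h1 h2 show "a = b" by auto
  qed
  have fdis: "\<forall>k\<in>?I. f k \<notin> X ` ?I \<and> f k \<notin> Y ` ?I \<and> f k \<noteq> s0"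
    using f s0 by auto
  have cP: "card ?P = 3 * n + 1"
    apply (subst card_Un_disjoint, simp, simp, use fdis s0 in force)+
    using card_image[OF injf] by (simp add: card_image inj_on_def)
  have PD: "?P \<subseteq> D" using XY f s0 by auto
  have DP: "D = ?P"
    using card_subset_eq[OF fD PD] cP cD card_mono[OF fD PD] by simp
  have notP: "T \<notin> ?P" "\<forall>j. Cv j \<notin> ?P" using f s0 by auto
  have notD: "T \<notin> D" "\<forall>j. Cv j \<notin> D" using notP DP by simp_all
  have UU: "\<forall>k. \<not> (U k \<in> ?P \<and> Ubar k \<in> ?P)"
  proof (intro allI notI)
    fix k assume "U k \<in> ?P \<and> Ubar k \<in> ?P"
    then obtain a b where "a \<in> ?I" "b \<in> ?I" "f a = U k" "f b = Ubar k" using s0 by auto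
    moreover from this have "f a \<in> {U a, W a, Ubar a}" "f b \<in> {U b, W b, Ubar b}" using f by metis+
    ultimately have "a = k" "b = k" by auto
    with \<open>f a = U k\<close> \<open>f b = Ubar k\<close> show False by simp
  qed
  have S1D: "S1 \<notin> D \<Longrightarrow> S2 \<in> D"
  proof -
    assume "S1 \<notin> D"
    then have "S1 \<in> ?V - D" by (simp add: mem_red_V)
    then obtain s where "s \<in> D" "{S1, s} \<in> red_E n m C" using dom by blast
    then show "S2 \<in> D" using nbS1[of s n m C] notD by auto
  qed
  have S3D: "S3 \<notin> D \<Longrightarrow> S2 \<in> D"
  proof -
    assume "S3 \<notin> D"
    then have "S3 \<in> ?V - D" by (simp add: mem_red_V)
    then obtain s where "s \<in> D" "{S3, s} \<in> red_E n m C" using dom by blast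
    then show "S2 \<in> D" using nbS3[of s n m C] notD by auto
  qed
  have SP: "\<forall>v \<in> {S1, S2, S3, S4}. v \<in> D \<longrightarrow> v = s0" using DP f by auto
  have "s0 = S2" using S1D S3D SP by auto
  then show ?thesis using DP notP UU SP cP by auto
qed

lemma lb:
  assumes "outer_connected_dominating (red_V n m) E' D" "E' \<subseteq> red_E n m C"
  shows "3 * n + 1 \<le> card D"
proof (rule ccontr)
  assume "\<not> 3 * n + 1 \<le> card D"
  then have "card D \<le> 3 * n + 1" by simp
  from struct[OF assms this] \<open>\<not> 3 * n + 1 \<le> card D\<close> show False by simp
qed

lemma sat_of:
  assumes D: "outer_connected_dominating (red_V n m) E' D" and sub: "E' \<subseteq> red_E n m C"
    and cD: "card D \<le> 3 * n + 1"
    and cl: "\<forall>j \<in> {1..m}. (\<forall>(i, b) \<in> C j. i \<in> {1..n})"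
  shows "satisfiable m C"
proof -
  note st = struct[OF D sub cD]
  have dom: "\<forall>v\<in>red_V n m - D. \<exists>s\<in>D. {v, s} \<in> red_E n m C"
    using D sub unfolding outer_connected_dominating_def dominating_set_def by blast
  define a where "a i = (U i \<in> D)" for i
  have "\<forall>j\<in>{1..m}. \<exists>(i, b)\<in>C j. a i = b"
  proof
    fix j assume j: "j \<in> {1..m}"
    then have "Cv j \<in> red_V n m - D" using st by (simp add: mem_red_V)
    then obtain s where s: "s \<in> D" "{Cv j, s} \<in> red_E n m C" using dom by blast
    then obtain l where l: "l \<in> C j" "s = lit_vertex l" using nbC[OF s(2)] st by auto
    obtain i b where ib: "l = (i, b)" by fastforce
    have "a i = b"
    proof (cases b)
      case True then show ?thesis using s l ib by (simp add: a_def)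
    next
      case False then have "Ubar i \<in> D" using s l ib by simp
      then show ?thesis using st False by (auto simp: a_def)
    qed
    then show "\<exists>(i, b)\<in>C j. a i = b" using l ib by blast
  qed
  then show ?thesis unfolding satisfiable_def by blast
qed

lemma incr:
  assumes D: "outer_connected_dominating (red_V n m) (red_E n m C - {{S1, S2}}) D"
  shows "3 * n + 2 \<le> card D"
proof (rule ccontr)
  assume "\<not> 3 * n + 2 \<le> card D"
  then have cD: "card D \<le> 3 * n + 1" by simp
  note st = struct[OF D _ cD, of C, simplified]
  have dom: "\<forall>v\<in>red_V n m - D. \<exists>s\<in>D. {v, s} \<in> red_E n m C - {{S1, S2}}"
    using D unfolding outer_connected_dominating_def dominating_set_def by blast
  have "S1 \<in> red_V n m - D" using st by (simp add: mem_red_V)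
  then obtain s where s: "s \<in> D" "{S1, s} \<in> red_E n m C" "{S1, s} \<noteq> {S1, S2}" using dom by blast
  then have "s \<noteq> S2" by blast
  then show False using nbS1[OF s(2)] st s(1) by auto
qed

lemma step_in:
  "x \<in> R \<Longrightarrow> y \<in> R \<Longrightarrow> {x, y} \<in> E \<Longrightarrow> (y, h) \<in> {(x, y). x \<in> R \<and> y \<in> R \<and> {x, y} \<in> E}\<^sup>*
   \<Longrightarrow> (x, h) \<in> {(x, y). x \<in> R \<and> y \<in> R \<and> {x, y} \<in> E}\<^sup>*"
  by (rule converse_rtrancl_into_rtrancl) auto

definition Dsat :: "nat \<Rightarrow> (nat \<Rightarrow> bool) \<Rightarrow> vert set" where
  "Dsat n a = X ` {1..n} \<union> Y ` {1..n} \<union> (\<lambda>k. if a k then U k else Ubar k) ` {1..n} \<union> {S2}"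

lemma Dsat_card: "card (Dsat n a) \<le> 3 * n + 1"
proof -
  have "card (Dsat n a) \<le> card (X ` {1..n} \<union> Y ` {1..n} \<union> (\<lambda>k. if a k then U k else Ubar k) ` {1..n}) + card {S2}"
    unfolding Dsat_def by (rule card_Un_le)
  also have "\<dots> \<le> card (X ` {1..n} \<union> Y ` {1..n}) + card ((\<lambda>k. if a k then U k else Ubar k) ` {1..n}) + 1"
    using card_Un_le by simp
  also have "\<dots> \<le> card (X ` {1..n}) + card (Y ` {1..n}) + card ((\<lambda>k. if a k then U k else Ubar k) ` {1..n}) + 1"
    using card_Un_le by simp
  also have "\<dots> \<le> n + n + n + 1"
    using card_image_le[of "{1..n}" X] card_image_le[of "{1..n}" Y]
      card_image_le[of "{1..n}" "\<lambda>k. if a k then U k else Ubar k"] by simp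
  finally show ?thesis by simp
qed

lemma Dsat_ocd:
  assumes n: "n \<ge> 1" and cl: "\<forall>j \<in> {1..m}. (\<forall>(i, b) \<in> C j. i \<in> {1..n})"
    and sat: "\<forall>j\<in>{1..m}. \<exists>(i, b)\<in>C j. a i = b"
  shows "outer_connected_dominating (red_V n m) (red_E n m C) (Dsat n a)"
proof -
  let ?D = "Dsat n a" and ?V = "red_V n m" and ?E = "red_E n m C"
  let ?R = "?V - ?D"
  let ?r = "{(x, y). x \<in> ?R \<and> y \<in> ?R \<and> {x, y} \<in> ?E}"
  have DV: "?D \<subseteq> ?V" by (auto simp: Dsat_def mem_red_V)
  have dom: "\<exists>s\<in>?D. {v, s} \<in> ?E" if v: "v \<in> ?R" for v
  proof (cases v)
    case (U k) then show ?thesis using v by (intro bexI[of _ "X k"]) (auto simp: red_E_pair mem_red_V Dsat_def)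
  next
    case (W k) then show ?thesis using v
      by (intro bexI[of _ "if a k then U k else Ubar k"]) (auto simp: red_E_pair mem_red_V Dsat_def)
  next
    case (Ubar k) then show ?thesis using v by (intro bexI[of _ "Y k"]) (auto simp: red_E_pair mem_red_V Dsat_def)
  next
    case (Cv j)
    then have j: "j \<in> {1..m}" using v by (simp add: mem_red_V)
    then obtain i b where ib: "(i, b) \<in> C j" "a i = b" using sat by blast
    then have i: "i \<in> {1..n}" using cl j by blast
    show ?thesis using Cv j ib i
      by (intro bexI[of _ "lit_vertex (i, b)"]) (cases b; auto simp: red_E_pair Dsat_def lit_img)+
  next
    case T then show ?thesis using n
      by (intro bexI[of _ "if a 1 then U 1 else Ubar 1"]) (auto simp: red_E_pair Dsat_def)
  qed (use v in \<open>auto simp: red_E_pair mem_red_V Dsat_def\<close>)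
  have TR: "T \<in> ?R" by (auto simp: mem_red_V Dsat_def)
  have edge: "\<And>x y. x \<in> ?R \<Longrightarrow> y \<in> ?R \<Longrightarrow> {x, y} \<in> ?E \<Longrightarrow> (x, y) \<in> ?r\<^sup>*"
    by (rule r_into_rtrancl) blast
  have S1R: "S1 \<in> ?R" by (auto simp: mem_red_V Dsat_def)
  have S1T: "(S1, T) \<in> ?r\<^sup>*" using S1R TR by (intro edge) (auto simp: red_E_pair)
  have conn: "(v, T) \<in> ?r\<^sup>*" if v: "v \<in> ?R" for v
  proof (cases v)
    case (U k)
    have "{v, T} \<in> ?E" using v U by (simp add: red_E_pair mem_red_V)
    then show ?thesis using v TR by (intro edge)
  next
    case (Ubar k)
    have "{v, T} \<in> ?E" using v Ubar by (simp add: red_E_pair mem_red_V)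
    then show ?thesis using v TR by (intro edge)
  next
    case (W k)
    have k: "k \<in> {1..n}" using v W by (simp add: mem_red_V)
    obtain ov where ov: "ov = (if a k then Ubar k else U k)" by blast
    have oR: "ov \<in> ?R" using k ov by (cases "a k") (auto simp: mem_red_V Dsat_def)
    have e1: "{ov, T} \<in> ?E" using k ov by (cases "a k") (auto simp: red_E_pair)
    have e2: "{v, ov} \<in> ?E" using k ov W by (cases "a k") (auto simp: red_E_pair)
    have "(ov, T) \<in> ?r\<^sup>*" using oR TR e1 by (intro edge)
    moreover have "(v, ov) \<in> ?r\<^sup>*" using v oR e2 by (intro edge)
    ultimately show ?thesis by (rule rtrancl_trans[rotated])
  next
    case (Cv j)
    have "{v, S1} \<in> ?E" using v Cv by (simp add: red_E_pair mem_red_V)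
    then have "(v, S1) \<in> ?r\<^sup>*" using v S1R by (intro edge)
    then show ?thesis using S1T by (rule rtrancl_trans)
  next
    case S1 then show ?thesis using S1T by simp
  next
    case S3
    have "{v, T} \<in> ?E" using S3 by (simp add: red_E_pair)
    then show ?thesis using v TR by (intro edge)
  next
    case S4
    have "{v, T} \<in> ?E" using S4 by (simp add: red_E_pair)
    then show ?thesis using v TR by (intro edge)
  next
    case T then show ?thesis by simp
  qed (use v in \<open>auto simp: mem_red_V Dsat_def\<close>)
  show ?thesis unfolding outer_connected_dominating_def dominating_set_def
    using DV dom hub_conn[OF TR] conn by blast
qed

definition Dw :: "nat \<Rightarrow> vert \<Rightarrow> vert \<Rightarrow> nat \<Rightarrow> vert set" where
  "Dw n s c i0 = X ` {1..n} \<union> Y ` {1..n} \<union> W ` ({1..n} - {i0}) \<union> {c, S2, s}"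

lemma Dw_card: assumes i0: "i0 \<in> {1..n}" shows "card (Dw n s c i0) \<le> 3 * n + 2"
proof -
  have "card (Dw n s c i0) \<le> card (X ` {1..n} \<union> Y ` {1..n} \<union> W ` ({1..n} - {i0})) + card {c, S2, s}"
    unfolding Dw_def by (rule card_Un_le)
  also have "\<dots> \<le> card (X ` {1..n} \<union> Y ` {1..n} \<union> W ` ({1..n} - {i0})) + 3"
    using card_insert_le_m1[of 2 "{S2, s}" c] card_insert_le_m1[of 1 "{s}" S2]
    by (simp add: card_insert_if)
  also have "\<dots> \<le> card (X ` {1..n}) + card (Y ` {1..n}) + card (W ` ({1..n} - {i0})) + 3"
    using card_Un_le[of "X ` {1..n}" "Y ` {1..n}"] card_Un_le[of "X ` {1..n} \<union> Y ` {1..n}" "W ` ({1..n} - {i0})"]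
    by simp
  also have "\<dots> \<le> n + n + (n - 1) + 3"
    using card_image_le[of "{1..n}" X] card_image_le[of "{1..n}" Y]
      card_image_le[of "{1..n} - {i0}" W] card_Diff_singleton[OF i0] i0 by (simp, linarith)
  finally show ?thesis using i0 by simp
qed

lemma inE': "x \<in> D \<Longrightarrow> {v, x} \<in> E \<Longrightarrow> {v, x} \<noteq> e \<Longrightarrow> \<exists>d\<in>D. {v, d} \<in> E - {e}"
  by blast

lemma Dw_ocd:
  assumes i0: "i0 \<in> {1..n}" and c: "c = U i0 \<or> c = W i0 \<or> c = Ubar i0" and s: "s = S1 \<or> s = S3 \<or> s = S4"
  and Hb: "\<forall>k\<in>{1..n}. (k \<noteq> i0 \<or> c = W i0) \<longrightarrow> e \<noteq> {T, U k} \<and> e \<noteq> {T, Ubar k}"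
  and HU: "c = U i0 \<longrightarrow> e \<noteq> {U i0, W i0} \<and> e \<noteq> {Ubar i0, Y i0} \<and> e \<noteq> {W i0, Ubar i0} \<and> e \<noteq> {T, Ubar i0}"
  and HUb: "c = Ubar i0 \<longrightarrow> e \<noteq> {X i0, U i0} \<and> e \<noteq> {U i0, W i0} \<and> e \<noteq> {W i0, Ubar i0} \<and> e \<noteq> {T, U i0}"
  and HT: "e \<noteq> {T, s} \<or> (c = U i0 \<and> e \<noteq> {T, U i0})"
  and HS: "\<forall>s'. (s' = S1 \<or> s' = S3 \<or> s' = S4) \<longrightarrow> s' \<noteq> s \<longrightarrow> e \<noteq> {S2, s'} \<and> e \<noteq> {T, s'}"
  and HC: "\<forall>j\<in>{1..m}. e \<noteq> {s, Cv j}"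
  shows "outer_connected_dominating (red_V n m) (red_E n m C - {e}) (Dw n s c i0)"
proof -
  let ?D = "Dw n s c i0" and ?V = "red_V n m" and ?E = "red_E n m C - {e}"
  let ?R = "?V - ?D"
  let ?r = "{(x, y). x \<in> ?R \<and> y \<in> ?R \<and> {x, y} \<in> ?E}"
  have Em: "\<And>a b. {a, b} \<in> ?E \<longleftrightarrow> (adj n m C a b \<or> adj n m C b a) \<and> {a, b} \<noteq> e"
    by (simp add: red_E_pair)
  have DV: "?D \<subseteq> ?V" using i0 c s by (auto simp: Dw_def mem_red_V)
  have inD: "\<And>v. v \<in> ?D \<longleftrightarrow> (v \<in> X ` {1..n} \<or> v \<in> Y ` {1..n} \<or> v \<in> W ` ({1..n} - {i0}) \<or> v = c \<or> v = S2 \<or> v = s)"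
    by (auto simp: Dw_def)
  have cD: "c \<in> ?D" and sD: "s \<in> ?D" and S2D: "S2 \<in> ?D" by (simp_all add: inD)
  have dom: "\<exists>d\<in>?D. {v, d} \<in> ?E" if v: "v \<in> ?R" for v
  proof (cases v)
    case (U k)
    have k: "k \<in> {1..n}" and ck: "c \<noteq> U k" using v U by (auto simp: mem_red_V inD)
    show ?thesis
    proof (cases "e = {X k, U k}")
      case False
      have "X k \<in> ?D" using k by (simp add: inD)
      moreover have "{v, X k} \<in> red_E n m C" using U k by (simp add: red_E_pair)
      moreover have "{v, X k} \<noteq> e" using U False by (metis insert_commute)
      ultimately show ?thesis by blast
    next
      case True
      have "k \<noteq> i0 \<or> c = W i0" using c HUb True ck by auto
      then have "W k \<in> ?D" using k by (auto simp: inD)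
      moreover have "{v, W k} \<in> red_E n m C" using U k by (simp add: red_E_pair)
      moreover have "{v, W k} \<noteq> e" using U True by (auto simp: doubleton_eq_iff)
      ultimately show ?thesis by blast
    qed
  next
    case (Ubar k)
    have k: "k \<in> {1..n}" and ck: "c \<noteq> Ubar k" using v Ubar by (auto simp: mem_red_V inD)
    show ?thesis
    proof (cases "e = {Ubar k, Y k}")
      case False
      have "Y k \<in> ?D" using k by (simp add: inD)
      moreover have "{v, Y k} \<in> red_E n m C" using Ubar k by (simp add: red_E_pair)
      moreover have "{v, Y k} \<noteq> e" using Ubar False by (metis insert_commute)
      ultimately show ?thesis by blast
    next
      case True
      have "k \<noteq> i0 \<or> c = W i0" using c HU True ck by auto
      then have "W k \<in> ?D" using k by (auto simp: inD)
      moreover have "{v, W k} \<in> red_E n m C" using Ubar k by (simp add: red_E_pair)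
      moreover have "{v, W k} \<noteq> e" using Ubar True by (auto simp: doubleton_eq_iff)
      ultimately show ?thesis by blast
    qed
  next
    case (W k)
    have k: "k = i0" "c \<noteq> W i0" using v W by (auto simp: mem_red_V inD)
    show ?thesis
    proof (cases "c = U i0")
      case True
      have "{v, c} \<in> red_E n m C" using W k True i0 by (simp add: red_E_pair)
      moreover have "e \<noteq> {U i0, W i0}" using HU True by blast
      then have "{v, c} \<noteq> e" using W k True by (metis insert_commute)
      ultimately show ?thesis using cD by blast
    next
      case False then have cc: "c = Ubar i0" using c k by simp
      have "{v, c} \<in> red_E n m C" using W k cc i0 by (simp add: red_E_pair)
      moreover have "e \<noteq> {W i0, Ubar i0}" using HUb cc by blast
      then have "{v, c} \<noteq> e" using W k cc by (metis insert_commute)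
      ultimately show ?thesis using cD by blast
    qed
  next
    case (Cv j)
    have j: "j \<in> {1..m}" using v Cv by (simp add: mem_red_V)
    then have "e \<noteq> {s, Cv j}" using HC by blast
    then have "{v, s} \<noteq> e" using Cv by (metis insert_commute)
    moreover have "{v, s} \<in> red_E n m C" using Cv j s by (auto simp: red_E_pair)
    ultimately show ?thesis using sD by blast
  next
    case S1
    then have "S1 \<noteq> s" using v by (auto simp: inD)
    then have "e \<noteq> {S2, S1}" using HS by blast
    then have "{v, S2} \<noteq> e" using S1 by (metis insert_commute)
    moreover have "{v, S2} \<in> red_E n m C" using S1 by (simp add: red_E_pair)
    ultimately show ?thesis using S2D by blast
  next
    case S3
    then have "S3 \<noteq> s" using v by (auto simp: inD)
    then have "e \<noteq> {S2, S3}" using HS by blast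
    then have "{v, S2} \<noteq> e" using S3 by (metis insert_commute)
    moreover have "{v, S2} \<in> red_E n m C" using S3 by (simp add: red_E_pair)
    ultimately show ?thesis using S2D by blast
  next
    case S4
    then have "S4 \<noteq> s" using v by (auto simp: inD)
    then have "e \<noteq> {S2, S4}" using HS by blast
    then have "{v, S2} \<noteq> e" using S4 by (metis insert_commute)
    moreover have "{v, S2} \<in> red_E n m C" using S4 by (simp add: red_E_pair)
    ultimately show ?thesis using S2D by blast
  next
    case T
    show ?thesis
    proof (cases "e = {T, s}")
      case False
      then have "{v, s} \<noteq> e" using T by simp
      moreover have "{v, s} \<in> red_E n m C" using T s by (auto simp: red_E_pair)
      ultimately show ?thesis using sD by blast
    next
      case True then have cu: "c = U i0" and "e \<noteq> {T, U i0}" using HT by auto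
      then have "{v, c} \<noteq> e" using T by simp
      moreover have "{v, c} \<in> red_E n m C" using T cu i0 by (simp add: red_E_pair)
      ultimately show ?thesis using cD by blast
    qed
  qed (use v in \<open>auto simp: mem_red_V inD\<close>)
  have TR: "T \<in> ?R" using c s by (auto simp: inD mem_red_V)
  have edge: "\<And>x y. x \<in> ?R \<Longrightarrow> y \<in> ?R \<Longrightarrow> {x, y} \<in> red_E n m C \<Longrightarrow> {x, y} \<noteq> e \<Longrightarrow> (x, y) \<in> ?r\<^sup>*"
    by (rule r_into_rtrancl) blast
  have Sconn: "(p, T) \<in> ?r\<^sup>*" if p: "p = S1 \<or> p = S3 \<or> p = S4" "p \<noteq> s" for p
  proof -
    have "e \<noteq> {T, p}" using HS p by blast
    then have "{p, T} \<noteq> e" by (metis insert_commute)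
    moreover have "p \<in> ?R" using p c by (auto simp: inD mem_red_V)
    moreover have "{p, T} \<in> red_E n m C" using p by (auto simp: red_E_pair)
    ultimately show ?thesis using TR edge by blast
  qed
  have conn: "(v, T) \<in> ?r\<^sup>*" if v: "v \<in> ?R" for v
  proof (cases v)
    case (U k)
    have k: "k \<in> {1..n}" and ck: "c \<noteq> U k" using v U by (auto simp: mem_red_V inD)
    have "e \<noteq> {T, U k}"
    proof (cases "k \<noteq> i0 \<or> c = W i0")
      case True then show ?thesis using Hb k by blast
    next
      case False then have "c = Ubar i0" "k = i0" using c ck by auto
      then show ?thesis using HUb by blast
    qed
    then have "{v, T} \<noteq> e" using U by (metis insert_commute)
    moreover have "{v, T} \<in> red_E n m C" using U k by (simp add: red_E_pair)
    ultimately show ?thesis using v TR edge by blast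
  next
    case (Ubar k)
    have k: "k \<in> {1..n}" and ck: "c \<noteq> Ubar k" using v Ubar by (auto simp: mem_red_V inD)
    have "e \<noteq> {T, Ubar k}"
    proof (cases "k \<noteq> i0 \<or> c = W i0")
      case True then show ?thesis using Hb k by blast
    next
      case False then have "c = U i0" "k = i0" using c ck by auto
      then show ?thesis using HU by blast
    qed
    then have "{v, T} \<noteq> e" using Ubar by (metis insert_commute)
    moreover have "{v, T} \<in> red_E n m C" using Ubar k by (simp add: red_E_pair)
    ultimately show ?thesis using v TR edge by blast
  next
    case (W k)
    have k: "k = i0" "c \<noteq> W i0" using v W by (auto simp: mem_red_V inD)
    show ?thesis
    proof (cases "c = U i0")
      case True
      have "Ubar i0 \<notin> ?D" unfolding inD using True s by auto
      then have wR: "Ubar i0 \<in> ?R" using i0 by (simp add: mem_red_V)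
      have h: "e \<noteq> {W i0, Ubar i0}" "e \<noteq> {T, Ubar i0}" using HU True by blast+
      have "(v, Ubar i0) \<in> ?r\<^sup>*"
        using edge[OF v wR] h W k i0 by (simp add: red_E_pair)
      moreover have "(Ubar i0, T) \<in> ?r\<^sup>*"
        using edge[OF wR TR] h i0 by (simp add: red_E_pair insert_commute)
      ultimately show ?thesis by (rule rtrancl_trans)
    next
      case False then have cc: "c = Ubar i0" using c k by simp
      have "U i0 \<notin> ?D" unfolding inD using cc s by auto
      then have wR: "U i0 \<in> ?R" using i0 by (simp add: mem_red_V)
      have h: "e \<noteq> {U i0, W i0}" "e \<noteq> {T, U i0}" using HUb cc by blast+
      have "(v, U i0) \<in> ?r\<^sup>*"
        using edge[OF v wR] h W k i0 by (simp add: red_E_pair insert_commute)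
      moreover have "(U i0, T) \<in> ?r\<^sup>*"
        using edge[OF wR TR] h i0 by (simp add: red_E_pair insert_commute)
      ultimately show ?thesis by (rule rtrancl_trans)
    qed
  next
    case (Cv j)
    have j: "j \<in> {1..m}" using v Cv by (simp add: mem_red_V)
    obtain p q where pq: "p \<noteq> q" "p = S1 \<or> p = S3 \<or> p = S4" "q = S1 \<or> q = S3 \<or> q = S4" "p \<noteq> s" "q \<noteq> s"
      using s that[of S3 S4] that[of S1 S4] that[of S1 S3] by auto
    obtain t where t: "t = S1 \<or> t = S3 \<or> t = S4" "t \<noteq> s" "e \<noteq> {t, Cv j}"
    proof (cases "e = {p, Cv j}")
      case True then have "e \<noteq> {q, Cv j}" using pq by (auto simp: doubleton_eq_iff)
      then show ?thesis using that pq by blast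
    next
      case False then show ?thesis using that pq by blast
    qed
    have tR: "t \<in> ?R" using t c by (auto simp: inD mem_red_V)
    have "(v, t) \<in> ?r\<^sup>*"
      using edge[OF v tR] t Cv j by (auto simp: red_E_pair insert_commute)
    then show ?thesis using Sconn[OF t(1,2)] by (rule rtrancl_trans)
  next
    case S1 then show ?thesis using Sconn v by (auto simp: inD)
  next
    case S3 then show ?thesis using Sconn v by (auto simp: inD)
  next
    case S4 then show ?thesis using Sconn v by (auto simp: inD)
  qed (use v in \<open>auto simp: mem_red_V inD\<close>)
  show ?thesis unfolding outer_connected_dominating_def dominating_set_def
    using DV dom hub_conn[OF TR] conn by blast
qed

lemma wit:
  assumes i0: "i0 \<in> {1..n}" and c: "c = U i0 \<or> c = W i0 \<or> c = Ubar i0" and s: "s = S1 \<or> s = S3 \<or> s = S4"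
  and Hb: "\<forall>k\<in>{1..n}. (k \<noteq> i0 \<or> c = W i0) \<longrightarrow> e \<noteq> {T, U k} \<and> e \<noteq> {T, Ubar k}"
  and HU: "c = U i0 \<longrightarrow> e \<noteq> {U i0, W i0} \<and> e \<noteq> {Ubar i0, Y i0} \<and> e \<noteq> {W i0, Ubar i0} \<and> e \<noteq> {T, Ubar i0}"
  and HUb: "c = Ubar i0 \<longrightarrow> e \<noteq> {X i0, U i0} \<and> e \<noteq> {U i0, W i0} \<and> e \<noteq> {W i0, Ubar i0} \<and> e \<noteq> {T, U i0}"
  and HT: "e \<noteq> {T, s} \<or> (c = U i0 \<and> e \<noteq> {T, U i0})"
  and HS: "\<forall>s'. (s' = S1 \<or> s' = S3 \<or> s' = S4) \<longrightarrow> s' \<noteq> s \<longrightarrow> e \<noteq> {S2, s'} \<and> e \<noteq> {T, s'}"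
  and HC: "\<forall>j\<in>{1..m}. e \<noteq> {s, Cv j}"
  shows "ocd_number (red_V n m) (red_E n m C - {e}) \<le> 3 * n + 2"
  using ocd_number_le[OF finite_red_V Dw_ocd[OF assms, of C]] Dw_card[OF i0, of s c] by linarith

lemma edge_bound:
  assumes n: "n \<ge> 1" and e: "e \<in> red_E n m C"
  shows "ocd_number (red_V n m) (red_E n m C - {e}) \<le> 3 * n + 2"
proof -
  obtain a b where ab: "e = {a, b}" "adj n m C a b" using e by (auto simp: red_E_mem)
  have one: "(1::nat) \<in> {1..n}" using n by simp
  show ?thesis
  proof (cases a)
    case (X i)
    then have i: "i \<in> {1..n}" "b = U i" using ab by auto
    show ?thesis by (rule wit[of i n "W i" S1]) (use i ab in \<open>auto simp: doubleton_eq_iff\<close>)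
  next
    case (U i)
    then have i: "i \<in> {1..n}" "b = W i \<or> b = T" using ab by auto
    then show ?thesis
    proof (elim conjE disjE)
      assume "b = W i"
      then show ?thesis by (intro wit[of i n "W i" S1]) (use i ab U in \<open>auto simp: doubleton_eq_iff\<close>)
    next
      assume "b = T"
      then show ?thesis by (intro wit[of i n "U i" S1]) (use i ab U in \<open>auto simp: doubleton_eq_iff\<close>)
    qed
  next
    case (W i)
    then have i: "i \<in> {1..n}" "b = Ubar i" using ab by auto
    show ?thesis by (rule wit[of i n "W i" S1]) (use i ab W in \<open>auto simp: doubleton_eq_iff\<close>)
  next
    case (Ubar i)
    then have i: "i \<in> {1..n}" "b = Y i \<or> b = T" using ab by auto
    then show ?thesis
    proof (elim conjE disjE)
      assume "b = Y i"
      then show ?thesis by (intro wit[of i n "W i" S1]) (use i ab Ubar in \<open>auto simp: doubleton_eq_iff\<close>)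
    next
      assume "b = T"
      then show ?thesis by (intro wit[of i n "Ubar i" S1]) (use i ab Ubar in \<open>auto simp: doubleton_eq_iff\<close>)
    qed
  next
    case (Cv j)
    then have j: "b \<in> lit_vertex ` C j \<or> b = S1 \<or> b = S3 \<or> b = S4" using ab by auto
    then show ?thesis
    proof (elim disjE)
      assume "b \<in> lit_vertex ` C j"
      then obtain l where "b = lit_vertex l" by blast
      then have "b = U (fst l) \<or> b = Ubar (fst l)" by (simp add: lit_vertex_eq)
      then show ?thesis by (intro wit[of 1 n "W 1" S1]) (use one ab Cv in \<open>auto simp: doubleton_eq_iff\<close>)
    next
      assume "b = S1"
      then show ?thesis by (intro wit[of 1 n "W 1" S3]) (use one ab Cv in \<open>auto simp: doubleton_eq_iff\<close>)
    next
      assume "b = S3"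
      then show ?thesis by (intro wit[of 1 n "W 1" S1]) (use one ab Cv in \<open>auto simp: doubleton_eq_iff\<close>)
    next
      assume "b = S4"
      then show ?thesis by (intro wit[of 1 n "W 1" S1]) (use one ab Cv in \<open>auto simp: doubleton_eq_iff\<close>)
    qed
  next
    case S1
    then have "b = S2 \<or> b = T" using ab by auto
    then show ?thesis
    proof (elim disjE)
      assume "b = S2"
      then show ?thesis by (intro wit[of 1 n "W 1" S1]) (use one ab S1 in \<open>auto simp: doubleton_eq_iff\<close>)
    next
      assume "b = T"
      then show ?thesis by (intro wit[of 1 n "U 1" S1]) (use one ab S1 in \<open>auto simp: doubleton_eq_iff\<close>)
    qed
  next
    case S3
    then have "b = S2 \<or> b = T" using ab by auto
    then show ?thesis
    proof (elim disjE)
      assume "b = S2"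
      then show ?thesis by (intro wit[of 1 n "W 1" S3]) (use one ab S3 in \<open>auto simp: doubleton_eq_iff\<close>)
    next
      assume "b = T"
      then show ?thesis by (intro wit[of 1 n "U 1" S3]) (use one ab S3 in \<open>auto simp: doubleton_eq_iff\<close>)
    qed
  next
    case S4
    then have "b = S2 \<or> b = T" using ab by auto
    then show ?thesis
    proof (elim disjE)
      assume "b = S2"
      then show ?thesis by (intro wit[of 1 n "W 1" S4]) (use one ab S4 in \<open>auto simp: doubleton_eq_iff\<close>)
    next
      assume "b = T"
      then show ?thesis by (intro wit[of 1 n "U 1" S4]) (use one ab S4 in \<open>auto simp: doubleton_eq_iff\<close>)
    qed
  qed (use ab in auto)
qed

lemma finite_red_E:
  assumes "\<forall>j \<in> {1..m}. card (C j) = 3"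
  shows "finite (red_E n m C)"
proof -
  have "{{Cv j, lit_vertex l} | j l. j \<in> {1..m} \<and> l \<in> C j} = (\<Union>j\<in>{1..m}. (\<lambda>l. {Cv j, lit_vertex l}) ` C j)"
    by blast
  moreover have "finite (\<Union>j\<in>{1..m}. (\<lambda>l. {Cv j, lit_vertex l}) ` C j)"
  proof (intro finite_UN_I finite_imageI)
    fix j assume "j \<in> {1..m}"
    then have "card (C j) = 3" using assms by blast
    then show "finite (C j)" by (metis card.infinite zero_neq_numeral)
  qed simp
  ultimately show ?thesis unfolding red_E_def by simp
qed

theorem claim5p4:
  fixes n m :: nat and C :: "nat \<Rightarrow> literal set"
  assumes "n \<ge> 1"
    and "\<forall>j \<in> {1..m}. card (C j) = 3 \<and> (\<forall>(i, b) \<in> C j. i \<in> {1..n})"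
  shows "(\<forall>e \<in> red_E n m C. ocd_number (red_V n m) (red_E n m C - {e}) \<le> 3 * n + 2)
       \<and> (ocd_number (red_V n m) (red_E n m C) = 3 * n + 1 \<longleftrightarrow> bondage_ocd (red_V n m) (red_E n m C) = 1)
       \<and> (satisfiable m C \<longleftrightarrow> bondage_ocd (red_V n m) (red_E n m C) = 1)"
proof -
  let ?V = "red_V n m" and ?E = "red_E n m C"
  have n: "n \<ge> 1" using assms by simp
  have cl: "\<forall>j \<in> {1..m}. (\<forall>(i, b) \<in> C j. i \<in> {1..n})" using assms by blast
  have fV: "finite ?V" by (rule finite_red_V)
  have fE: "finite ?E" using assms by (intro finite_red_E) blast
  have A: "\<forall>e \<in> ?E. ocd_number ?V (?E - {e}) \<le> 3 * n + 2" using edge_bound[OF n] by blast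
  have e0: "{S1, S2} \<in> ?E" by (simp add: red_E_pair)
  have lb0: "3 * n + 1 \<le> ocd_number ?V ?E"
  proof -
    obtain D where D: "outer_connected_dominating ?V ?E D" "card D = ocd_number ?V ?E"
      using ocd_number_ex[OF fV] by blast
    show ?thesis using lb[OF D(1) subset_refl] D(2) by simp
  qed
  have ub: "ocd_number ?V ?E \<le> 3 * n + 2"
    using ocd_number_mono[OF fV, of "?E - {{S1, S2}}" ?E] A e0 by fastforce
  have sat_iff: "satisfiable m C \<longleftrightarrow> ocd_number ?V ?E = 3 * n + 1"
  proof
    assume "satisfiable m C"
    then obtain a where a: "\<forall>j\<in>{1..m}. \<exists>(i, b)\<in>C j. a i = b" unfolding satisfiable_def by blast
    have "ocd_number ?V ?E \<le> card (Dsat n a)"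
      by (rule ocd_number_le[OF fV Dsat_ocd[OF n cl a]])
    then show "ocd_number ?V ?E = 3 * n + 1" using Dsat_card[of n a] lb0 by linarith
  next
    assume h: "ocd_number ?V ?E = 3 * n + 1"
    obtain D where D: "outer_connected_dominating ?V ?E D" "card D = ocd_number ?V ?E"
      using ocd_number_ex[OF fV] by blast
    show "satisfiable m C" by (rule sat_of[OF D(1) subset_refl _ cl]) (use D(2) h in simp)
  qed
  have cV: "3 * n + 4 \<le> card ?V"
  proof -
    have "U ` {1..n} \<union> W ` {1..n} \<union> Ubar ` {1..n} \<union> {S1, S2, S3, S4} \<subseteq> ?V"
      by (auto simp: mem_red_V)
    from card_mono[OF fV this] show ?thesis by (simp only: card_big)
  qed
  have bond: "bondage_ocd ?V ?E = 1 \<longleftrightarrow> (\<exists>e\<in>?E. ocd_number ?V (?E - {e}) > ocd_number ?V ?E)"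
    by (rule bondage_one[OF fV fE]) (use ub cV in linarith)
  have B: "ocd_number ?V ?E = 3 * n + 1 \<longleftrightarrow> bondage_ocd ?V ?E = 1"
  proof
    assume h: "ocd_number ?V ?E = 3 * n + 1"
    obtain D where D: "outer_connected_dominating ?V (?E - {{S1, S2}}) D" "card D = ocd_number ?V (?E - {{S1, S2}})"
      using ocd_number_ex[OF fV] by blast
    have "3 * n + 2 \<le> ocd_number ?V (?E - {{S1, S2}})" using incr[OF D(1)] D(2) by simp
    then show "bondage_ocd ?V ?E = 1" using bond e0 h by force
  next
    assume "bondage_ocd ?V ?E = 1"
    then obtain e where "e \<in> ?E" "ocd_number ?V (?E - {e}) > ocd_number ?V ?E" using bond by blast
    then show "ocd_number ?V ?E = 3 * n + 1" using A lb0 by force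
  qed
  show ?thesis using A B sat_iff by blast
qed

end
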